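(* For integers $k\ge1$ define the differential operators in the variables $t_1,t_2,\dots$ $$L_k=\frac{\partial}{\partial t_k}-\sum_{n\ge1}n\,t_n\,\frac{\partial}{\partial t_{n+k}}.$$ Then (i) $[L_n,L_m]=(m-n)L_{m+n}$ for all $n,m\ge1$; and (ii) if $U$ solves $\sum_{n\ge1}n t_n U^n=1$ (with $U=\frac1{t_1}+\dots$) and $f_0$ is any function with $\partial f_0/\partial t_n=U^n$ for all $n\ge1$ (e.g. $f_0=\sum_{n\ge1}t_nU^n-\ln U$), then $L_kf_0=0$ for all $k\ge1$.
   Context: The operators act on (formal power series or smooth) functions of countably many variables $t_1,t_2,\dots$; each application involves only finitely many nonzero terms on functions depending on finitely many variables, or is understood formally. *)

theory Defs
  imports "HOL-Analysis.Analysis"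
begin

text \<open>Functions of the variables t_1, t_2, ... are modelled as maps
  (nat => real) => real; the point t assigns the value t n to the variable t_n
  (the coordinate t 0 is an unused extra coordinate).\<close>

definition partial :: "nat \<Rightarrow> ((nat \<Rightarrow> real) \<Rightarrow> real) \<Rightarrow> (nat \<Rightarrow> real) \<Rightarrow> real" where
  "partial n F = (\<lambda>t. deriv (\<lambda>s. F (t(n := s))) (t n))"

fun iter_partial :: "nat list \<Rightarrow> ((nat \<Rightarrow> real) \<Rightarrow> real) \<Rightarrow> (nat \<Rightarrow> real) \<Rightarrow> real" where
  "iter_partial [] F = F"
| "iter_partial (i # is) F = partial i (iter_partial is F)"

definition finitely_dependent :: "((nat \<Rightarrow> real) \<Rightarrow> real) \<Rightarrow> bool" where
  "finitely_dependent F \<longleftrightarrow> (\<exists>N. \<forall>t t'. (\<forall>i<N. t i = t' i) \<longrightarrow> F t = F t')"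

text \<open>Smooth function of finitely many variables: all iterated partial derivatives
  exist everywhere and are continuous (product topology on nat => real, which for a
  function of finitely many variables is the usual topology of R^N).\<close>
definition smooth_fd :: "((nat \<Rightarrow> real) \<Rightarrow> real) \<Rightarrow> bool" where
  "smooth_fd F \<longleftrightarrow> finitely_dependent F \<and>
     (\<forall>is. continuous_on UNIV (iter_partial is F) \<and>
        (\<forall>i t. (\<lambda>s. iter_partial is F (t(i := s))) differentiable (at (t i))))"

definition L :: "nat \<Rightarrow> ((nat \<Rightarrow> real) \<Rightarrow> real) \<Rightarrow> (nat \<Rightarrow> real) \<Rightarrow> real" where
  "L k F = (\<lambda>t. partial k F t -
      (\<Sum>n. real (Suc n) * t (Suc n) * partial (Suc n + k) F t))"

end

theory Submission
  imports Defs
begin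

lemma clairaut:
  fixes g gx gy gxy gyx :: "real \<Rightarrow> real \<Rightarrow> real"
  assumes gx: "\<And>x y. ((\<lambda>x. g x y) has_real_derivative gx x y) (at x)"
  and gy: "\<And>x y. ((\<lambda>y. g x y) has_real_derivative gy x y) (at y)"
  and gxy: "\<And>x y. ((\<lambda>y. gx x y) has_real_derivative gxy x y) (at y)"
  and gyx: "\<And>x y. ((\<lambda>x. gy x y) has_real_derivative gyx x y) (at x)"
  and c1: "continuous_on UNIV (\<lambda>p. gxy (fst p) (snd p))"
  and c2: "continuous_on UNIV (\<lambda>p. gyx (fst p) (snd p))"
  shows "gxy a b = gyx a b"
proof (rule ccontr)
  assume ne: "gxy a b \<noteq> gyx a b"
  define e where "e = \<bar>gxy a b - gyx a b\<bar>"
  have e: "e > 0" using ne by (simp add: e_def)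
  have "continuous (at (a,b)) (\<lambda>p. gxy (fst p) (snd p))"
    using c1 by (simp add: continuous_on_eq_continuous_at)
  then obtain d1 where d1: "d1 > 0" "\<And>p. dist p (a,b) < d1 \<Longrightarrow> dist (gxy (fst p) (snd p)) (gxy a b) < e/2"
    unfolding continuous_at_eps_delta using e by (metis fst_conv snd_conv half_gt_zero)
  have "continuous (at (a,b)) (\<lambda>p. gyx (fst p) (snd p))"
    using c2 by (simp add: continuous_on_eq_continuous_at)
  then obtain d2 where d2: "d2 > 0" "\<And>p. dist p (a,b) < d2 \<Longrightarrow> dist (gyx (fst p) (snd p)) (gyx a b) < e/2"
    unfolding continuous_at_eps_delta using e by (metis fst_conv snd_conv half_gt_zero)
  define h where "h = min d1 d2 / 2"
  have h: "h > 0" "h < d1" "h < d2" using d1 d2 by (auto simp: h_def)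
  define D where "D = g (a+h) (b+h) - g (a+h) b - g a (b+h) + g a b"
  have ah: "a < a + h" and bh: "b < b + h" using h by auto
  have der1: "\<And>x. a \<le> x \<Longrightarrow> x \<le> a+h \<Longrightarrow> ((\<lambda>x. g x (b+h) - g x b) has_real_derivative gx x (b+h) - gx x b) (at x)"
    by (intro DERIV_diff gx)
  obtain \<xi> where \<xi>: "a < \<xi>" "\<xi> < a + h"
    "(g (a+h) (b+h) - g (a+h) b) - (g a (b+h) - g a b) = (a + h - a) * (gx \<xi> (b+h) - gx \<xi> b)"
    using MVT2[OF ah der1] by blast
  have der2: "\<And>y. b \<le> y \<Longrightarrow> y \<le> b+h \<Longrightarrow> ((\<lambda>y. gx \<xi> y) has_real_derivative gxy \<xi> y) (at y)"
    by (intro gxy)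
  obtain \<eta> where \<eta>: "b < \<eta>" "\<eta> < b + h"
    "gx \<xi> (b+h) - gx \<xi> b = (b + h - b) * gxy \<xi> \<eta>"
    using MVT2[OF bh der2] by blast
  have der3: "\<And>y. b \<le> y \<Longrightarrow> y \<le> b+h \<Longrightarrow> ((\<lambda>y. g (a+h) y - g a y) has_real_derivative gy (a+h) y - gy a y) (at y)"
    by (intro DERIV_diff gy)
  obtain \<eta>' where \<eta>': "b < \<eta>'" "\<eta>' < b + h"
    "(g (a+h) (b+h) - g a (b+h)) - (g (a+h) b - g a b) = (b + h - b) * (gy (a+h) \<eta>' - gy a \<eta>')"
    using MVT2[OF bh der3] by blast
  have der4: "\<And>x. a \<le> x \<Longrightarrow> x \<le> a+h \<Longrightarrow> ((\<lambda>x. gy x \<eta>') has_real_derivative gyx x \<eta>') (at x)"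
    by (intro gyx)
  obtain \<xi>' where \<xi>': "a < \<xi>'" "\<xi>' < a + h"
    "gy (a+h) \<eta>' - gy a \<eta>' = (a + h - a) * gyx \<xi>' \<eta>'"
    using MVT2[OF ah der4] by blast
  have "h * h * gxy \<xi> \<eta> = h * h * gyx \<xi>' \<eta>'"
    using \<xi>(3) \<eta>(3) \<eta>'(3) \<xi>'(3) by (simp add: algebra_simps)
  hence eq: "gxy \<xi> \<eta> = gyx \<xi>' \<eta>'" using h by simp
  have dd: "dist (x, y) (a, b) < d" if "a < x" "x < a + h" "b < y" "y < b + h" "2*h \<le> d" for x y d
  proof -
    have "dist (x, y) (a, b) = sqrt ((x-a)^2 + (y-b)^2)" by (simp add: dist_Pair_Pair dist_real_def)
    also have "\<dots> \<le> \<bar>x-a\<bar> + \<bar>y-b\<bar>" by (rule sqrt_sum_squares_le_sum_abs)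
    also have "\<dots> < d" using that by auto
    finally show ?thesis .
  qed
  have "dist (gxy \<xi> \<eta>) (gxy a b) < e/2"
    using d1(2)[of "(\<xi>,\<eta>)"] dd[of \<xi> \<eta> d1] \<xi> \<eta> h by (auto simp: h_def)
  moreover have "dist (gyx \<xi>' \<eta>') (gyx a b) < e/2"
    using d2(2)[of "(\<xi>',\<eta>')"] dd[of \<xi>' \<eta>' d2] \<xi>' \<eta>' h by (auto simp: h_def)
  ultimately have "\<bar>gyx \<xi>' \<eta>' - gxy a b\<bar> < \<bar>gxy a b - gyx a b\<bar> / 2" "\<bar>gyx \<xi>' \<eta>' - gyx a b\<bar> < \<bar>gxy a b - gyx a b\<bar> / 2"
    using eq unfolding e_def dist_real_def by auto
  thus False by (auto simp: abs_if split: if_splits)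
qed
lemma alg:
  fixes DD :: "nat \<Rightarrow> nat \<Rightarrow> real" and D c :: "nat \<Rightarrow> real"
  assumes sym: "\<And>i j. DD i j = DD j i"
  shows "(DD n m - real n * D (n+m) - (\<Sum>b<M. c b * DD n (Suc b + m)))
     - (\<Sum>a<M. c a * (DD (Suc a + n) m - real (Suc a + n) * D (Suc a + n + m) - (\<Sum>b<M. c b * DD (Suc a + n) (Suc b + m))))
     - ((DD m n - real m * D (m+n) - (\<Sum>b<M. c b * DD m (Suc b + n)))
     - (\<Sum>a<M. c a * (DD (Suc a + m) n - real (Suc a + m) * D (Suc a + m + n) - (\<Sum>b<M. c b * DD (Suc a + m) (Suc b + n)))))
     = (real m - real n) * (D (m+n) - (\<Sum>a<M. c a * D (Suc a + (m+n))))"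
proof -
  have split: "(\<Sum>a<M. c a * (X a - Y a - Z a)) = (\<Sum>a<M. c a * X a) - (\<Sum>a<M. c a * Y a) - (\<Sum>a<M. c a * Z a)" for X Y Z :: "nat \<Rightarrow> real"
    by (simp add: algebra_simps sum_subtractf sum.distrib)
  have s1: "(\<Sum>b<M. c b * DD n (Suc b + m)) = (\<Sum>a<M. c a * DD (Suc a + m) n)"
    by (intro sum.cong refl, metis sym)
  have s2: "(\<Sum>b<M. c b * DD m (Suc b + n)) = (\<Sum>a<M. c a * DD (Suc a + n) m)"
    by (intro sum.cong refl, metis sym)
  have s3: "(\<Sum>a<M. c a * (\<Sum>b<M. c b * DD (Suc a + n) (Suc b + m)))
      = (\<Sum>a<M. c a * (\<Sum>b<M. c b * DD (Suc a + m) (Suc b + n)))"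
  proof -
    have "(\<Sum>a<M. c a * (\<Sum>b<M. c b * DD (Suc a + n) (Suc b + m))) = (\<Sum>a<M. \<Sum>b<M. c a * c b * DD (Suc a + n) (Suc b + m))"
      by (simp add: sum_distrib_left mult.assoc)
    also have "\<dots> = (\<Sum>b<M. \<Sum>a<M. c a * c b * DD (Suc a + n) (Suc b + m))"
      by (rule sum.swap)
    also have "\<dots> = (\<Sum>b<M. \<Sum>a<M. c b * c a * DD (Suc b + m) (Suc a + n))"
      by (intro sum.cong refl, metis sym mult.commute)
    also have "\<dots> = (\<Sum>a<M. c a * (\<Sum>b<M. c b * DD (Suc a + m) (Suc b + n)))"
      by (simp add: sum_distrib_left mult.assoc)
    finally show ?thesis .
  qed
  have s4: "(\<Sum>a<M. c a * (real (Suc a + n) * D (Suc a + n + m))) - (\<Sum>a<M. c a * (real (Suc a + m) * D (Suc a + m + n)))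
      = (real n - real m) * (\<Sum>a<M. c a * D (Suc a + (m+n)))"
    by (simp add: sum_distrib_left sum_subtractf[symmetric] algebra_simps)
  have s5: "DD m n = DD n m" by (rule sym)
  show ?thesis unfolding split using s1 s2 s3 s4 s5 by (simp add: algebra_simps)
qed
lemma line_deriv:
  assumes "smooth_fd F"
  shows "((\<lambda>s. iter_partial is F (t(i:=s))) has_real_derivative partial i (iter_partial is F) (t(i:=x))) (at x)"
proof -
  have "(\<lambda>s. iter_partial is F ((t(i:=x))(i:=s))) differentiable (at ((t(i:=x)) i))"
    using assms unfolding smooth_fd_def by blast
  hence "(\<lambda>s. iter_partial is F (t(i:=s))) differentiable (at x)" by simp
  hence "((\<lambda>s. iter_partial is F (t(i:=s))) has_real_derivative deriv (\<lambda>s. iter_partial is F (t(i:=s))) x) (at x)"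
    by (simp add: DERIV_deriv_iff_real_differentiable)
  moreover have "deriv (\<lambda>s. iter_partial is F (t(i:=s))) x = partial i (iter_partial is F) (t(i:=x))"
    by (simp add: partial_def)
  ultimately show ?thesis by simp
qed

lemma line_deriv0: "smooth_fd F \<Longrightarrow> ((\<lambda>s. F (t(i:=s))) has_real_derivative partial i F (t(i:=x))) (at x)"
  using line_deriv[of F "[]"] by simp

lemma line_deriv1: "smooth_fd F \<Longrightarrow> ((\<lambda>s. partial k F (t(i:=s))) has_real_derivative partial i (partial k F) (t(i:=x))) (at x)"
  using line_deriv[of F "[k]"] by simp

lemma coord_deriv: "((\<lambda>s. (t(j:=s)) k) has_real_derivative (if k = j then 1 else 0)) (at x)"
  by (cases "k = j") auto

lemma partial_sym:
  assumes sm: "smooth_fd F"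
  shows "partial i (partial j F) t = partial j (partial i F) t"
proof (cases "i = j")
  case True thus ?thesis by simp
next
  case False
  hence tw: "\<And>t x y. t(i:=x, j:=y) = t(j:=y, i:=x)" by (simp add: fun_upd_twist)
  have up1: "\<And>x y s. (t(i:=x, j:=y))(i:=s) = t(i:=s, j:=y)" using False by (auto simp: fun_upd_def)
  have up2: "\<And>x y s. (t(i:=x, j:=y))(j:=s) = t(i:=x, j:=s)" by (auto simp: fun_upd_def)
  define P where "P = (\<lambda>p::real\<times>real. t(i:=fst p, j:=snd p))"
  have cP: "continuous_on UNIV P"
  proof (rule continuous_on_coordinatewise_then_product)
    fix k
    show "continuous_on UNIV (\<lambda>p. P p k)"
    proof (cases "k = j")
      case True thus ?thesis by (simp add: P_def continuous_on_snd continuous_on_id)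
    next
      case kj: False
      show ?thesis
      proof (cases "k = i")
        case True thus ?thesis using kj by (simp add: P_def continuous_on_fst continuous_on_id)
      qed (use kj in \<open>simp add: P_def\<close>)
    qed
  qed
  have cont: "continuous_on UNIV (\<lambda>p. iter_partial is F (P p))" for "is"
    using sm unfolding smooth_fd_def
    by (metis cP continuous_on_compose2 subset_UNIV)
  have "partial j (partial i F) (t(i:=t i, j:=t j)) = partial i (partial j F) (t(i:=t i, j:=t j))"
  proof (rule clairaut[where g = "\<lambda>x y. F (t(i:=x, j:=y))"
        and gx = "\<lambda>x y. partial i F (t(i:=x, j:=y))"
        and gy = "\<lambda>x y. partial j F (t(i:=x, j:=y))"
        and gxy = "\<lambda>x y. partial j (partial i F) (t(i:=x, j:=y))"
        and gyx = "\<lambda>x y. partial i (partial j F) (t(i:=x, j:=y))"])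
    fix x y
    show "((\<lambda>x. F (t(i:=x, j:=y))) has_real_derivative partial i F (t(i:=x, j:=y))) (at x)"
      using line_deriv0[OF sm, of "t(i:=x, j:=y)" i x] by (simp add: up1)
    show "((\<lambda>y. F (t(i:=x, j:=y))) has_real_derivative partial j F (t(i:=x, j:=y))) (at y)"
      using line_deriv0[OF sm, of "t(i:=x, j:=y)" j y] by (simp add: up2)
    show "((\<lambda>y. partial i F (t(i:=x, j:=y))) has_real_derivative partial j (partial i F) (t(i:=x, j:=y))) (at y)"
      using line_deriv1[OF sm, of i "t(i:=x, j:=y)" j y] by (simp add: up2)
    show "((\<lambda>x. partial j F (t(i:=x, j:=y))) has_real_derivative partial i (partial j F) (t(i:=x, j:=y))) (at x)"
      using line_deriv1[OF sm, of j "t(i:=x, j:=y)" i x] by (simp add: up1)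
  next
    show "continuous_on UNIV (\<lambda>p. partial j (partial i F) (t(i := fst p, j := snd p)))"
      using cont[of "[j,i]"] by (simp add: P_def)
    show "continuous_on UNIV (\<lambda>p. partial i (partial j F) (t(i := fst p, j := snd p)))"
      using cont[of "[i,j]"] by (simp add: P_def)
  qed
  thus ?thesis by simp
qed

definition dep :: "nat \<Rightarrow> ((nat \<Rightarrow> real) \<Rightarrow> real) \<Rightarrow> bool" where
  "dep N F \<longleftrightarrow> (\<forall>t t'. (\<forall>i<N. t i = t' i) \<longrightarrow> F t = F t')"

lemma partial_zero:
  assumes "dep N F" "N \<le> j"
  shows "partial j F t = 0"
proof -
  have "(\<lambda>s. F (t(j:=s))) = (\<lambda>s. F t)"
    using assms unfolding dep_def by (intro ext) (metis fun_upd_other leD)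
  thus ?thesis by (simp add: partial_def)
qed

lemma dep_partial:
  assumes "dep N F" shows "dep N (partial j F)"
  unfolding dep_def
proof (intro allI impI)
  fix t t' :: "nat \<Rightarrow> real" assume ag: "\<forall>i<N. t i = t' i"
  show "partial j F t = partial j F t'"
  proof (cases "j < N")
    case True
    have "(\<lambda>s. F (t(j:=s))) = (\<lambda>s. F (t'(j:=s)))"
      using assms ag unfolding dep_def by (intro ext) auto
    moreover have "t j = t' j" using ag True by simp
    ultimately show ?thesis by (simp add: partial_def)
  next
    case False thus ?thesis using partial_zero[OF assms] by simp
  qed
qed

lemma dep_mono: "dep N F \<Longrightarrow> N \<le> M \<Longrightarrow> dep M F"
  unfolding dep_def by auto

lemma L_fin:
  assumes "dep N F"
  shows "L k F t = partial k F t - (\<Sum>n<N. real (Suc n) * t (Suc n) * partial (Suc n + k) F t)"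
proof -
  have "(\<Sum>n. real (Suc n) * t (Suc n) * partial (Suc n + k) F t) = (\<Sum>n<N. real (Suc n) * t (Suc n) * partial (Suc n + k) F t)"
    by (rule suminf_finite) (auto simp: partial_zero[OF assms])
  thus ?thesis by (simp add: L_def)
qed

lemma dep_L:
  assumes "dep N F" shows "dep (Suc N) (L k F)"
  unfolding dep_def
proof (intro allI impI)
  fix t t' :: "nat \<Rightarrow> real" assume ag: "\<forall>i<Suc N. t i = t' i"
  have d: "dep (Suc N) (partial j F)" for j by (rule dep_mono[OF dep_partial[OF assms]]) simp
  have "partial k F t = partial k F t'" using d ag unfolding dep_def by blast
  moreover have "(\<Sum>n<N. real (Suc n) * t (Suc n) * partial (Suc n + k) F t) = (\<Sum>n<N. real (Suc n) * t' (Suc n) * partial (Suc n + k) F t')"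
  proof (rule sum.cong[OF refl])
    fix n assume "n \<in> {..<N}"
    hence "t (Suc n) = t' (Suc n)" using ag by simp
    moreover have "partial (Suc n + k) F t = partial (Suc n + k) F t'" using d ag unfolding dep_def by blast
    ultimately show "real (Suc n) * t (Suc n) * partial (Suc n + k) F t = real (Suc n) * t' (Suc n) * partial (Suc n + k) F t'" by simp
  qed
  ultimately show "L k F t = L k F t'" by (simp add: L_fin[OF assms])
qed

lemma partial_L:
  assumes sm: "smooth_fd F" and dp: "dep N F"
  shows "partial j (L m F) t = partial j (partial m F) t - (\<Sum>n<N. real (Suc n) * ((if Suc n = j then 1 else 0) * partial (Suc n + m) F t + t (Suc n) * partial j (partial (Suc n + m) F) t))"
proof -
  have fe: "(\<lambda>s. L m F (t(j:=s))) = (\<lambda>s. partial m F (t(j:=s)) - (\<Sum>n<N. real (Suc n) * (t(j:=s)) (Suc n) * partial (Suc n + m) F (t(j:=s))))"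
    by (simp add: L_fin[OF dp])
  have "((\<lambda>s. partial m F (t(j:=s)) - (\<Sum>n<N. real (Suc n) * (t(j:=s)) (Suc n) * partial (Suc n + m) F (t(j:=s))))
     has_real_derivative (partial j (partial m F) t - (\<Sum>n<N. real (Suc n) * ((if Suc n = j then 1 else 0) * partial (Suc n + m) F t + t (Suc n) * partial j (partial (Suc n + m) F) t)))) (at (t j))"
  proof (rule DERIV_diff)
    show "((\<lambda>s. partial m F (t(j:=s))) has_real_derivative partial j (partial m F) t) (at (t j))"
      using line_deriv1[OF sm, of m t j "t j"] by simp
    show "((\<lambda>s. \<Sum>n<N. real (Suc n) * (t(j:=s)) (Suc n) * partial (Suc n + m) F (t(j:=s))) has_real_derivative
      (\<Sum>n<N. real (Suc n) * ((if Suc n = j then 1 else 0) * partial (Suc n + m) F t + t (Suc n) * partial j (partial (Suc n + m) F) t))) (at (t j))"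
    proof (rule DERIV_sum)
      fix n
      have "((\<lambda>s. real (Suc n) * (t(j:=s)) (Suc n) * partial (Suc n + m) F (t(j:=s))) has_real_derivative
         real (Suc n) * (if Suc n = j then 1 else 0) * partial (Suc n + m) F (t(j:=t j)) + partial j (partial (Suc n + m) F) (t(j:=t j)) * (real (Suc n) * (t(j:=t j)) (Suc n))) (at (t j))"
        by (rule DERIV_mult[OF DERIV_cmult[OF coord_deriv] line_deriv1[OF sm]])
      thus "((\<lambda>s. real (Suc n) * (t(j:=s)) (Suc n) * partial (Suc n + m) F (t(j:=s))) has_real_derivative
         real (Suc n) * ((if Suc n = j then 1 else 0) * partial (Suc n + m) F t + t (Suc n) * partial j (partial (Suc n + m) F) t)) (at (t j))"
        by (simp add: algebra_simps)
    qed
  qed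
  hence "deriv (\<lambda>s. L m F (t(j:=s))) (t j) = partial j (partial m F) t - (\<Sum>n<N. real (Suc n) * ((if Suc n = j then 1 else 0) * partial (Suc n + m) F t + t (Suc n) * partial j (partial (Suc n + m) F) t))"
    unfolding fe by (rule DERIV_imp_deriv)
  thus ?thesis by (simp add: partial_def)
qed

lemma partial_L':
  assumes sm: "smooth_fd F" and dp: "dep N F" and j: "j \<ge> 1"
  shows "partial j (L m F) t = partial j (partial m F) t - real j * partial (j + m) F t - (\<Sum>n<N. real (Suc n) * t (Suc n) * partial j (partial (Suc n + m) F) t)"
proof -
  have "(\<Sum>n<N. real (Suc n) * ((if Suc n = j then 1 else 0) * partial (Suc n + m) F t + t (Suc n) * partial j (partial (Suc n + m) F) t))
     = (\<Sum>n<N. (if j - 1 = n then real j * partial (j + m) F t else 0)) + (\<Sum>n<N. real (Suc n) * t (Suc n) * partial j (partial (Suc n + m) F) t)"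
    unfolding sum.distrib[symmetric] by (intro sum.cong refl) (use j in \<open>auto simp: algebra_simps\<close>)
  also have "(\<Sum>n<N. (if j - 1 = n then real j * partial (j + m) F t else 0)) = real j * partial (j + m) F t"
    using partial_zero[OF dp, of "j + m" t] j by (cases "j - 1 < N") (auto simp: sum.delta)
  finally show ?thesis by (simp add: partial_L[OF sm dp])
qed
theorem mainTheorem5:
  shows "(\<forall>F n m t. smooth_fd F \<longrightarrow> n \<ge> 1 \<longrightarrow> m \<ge> 1 \<longrightarrow>
            L n (L m F) t - L m (L n F) t = (real m - real n) * L (m + n) F t)
       \<and> (\<forall>(U :: (nat \<Rightarrow> real) \<Rightarrow> real) (f0 :: (nat \<Rightarrow> real) \<Rightarrow> real) D.
            (\<forall>t\<in>D. (\<lambda>n. real (Suc n) * t (Suc n) * U t ^ Suc n) sums 1) \<longrightarrow>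
            (\<forall>t\<in>D. \<forall>n\<ge>1. partial n f0 t = U t ^ n) \<longrightarrow>
            (\<forall>t\<in>D. \<forall>k\<ge>1. L k f0 t = 0))"
proof (intro conjI allI impI ballI)
  fix F :: "(nat \<Rightarrow> real) \<Rightarrow> real" and n m :: nat and t :: "nat \<Rightarrow> real"
  assume sm: "smooth_fd F" and n: "n \<ge> 1" and m: "m \<ge> 1"
  obtain N where dN: "dep N F" using sm unfolding smooth_fd_def finitely_dependent_def dep_def by blast
  define M where "M = Suc N"
  have dM: "dep M F" using dep_mono[OF dN] by (simp add: M_def)
  have dLm: "dep M (L m F)" using dep_L[OF dN] by (simp add: M_def)
  have dLn: "dep M (L n F)" using dep_L[OF dN] by (simp add: M_def)
  have e1: "\<And>a. partial (Suc a + n) (L m F) t = partial (Suc a + n) (partial m F) t - real (Suc a + n) * partial (Suc a + n + m) F t - (\<Sum>b<M. real (Suc b) * t (Suc b) * partial (Suc a + n) (partial (Suc b + m) F) t)"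
    by (rule partial_L'[OF sm dM]) simp
  have e2: "\<And>a. partial (Suc a + m) (L n F) t = partial (Suc a + m) (partial n F) t - real (Suc a + m) * partial (Suc a + m + n) F t - (\<Sum>b<M. real (Suc b) * t (Suc b) * partial (Suc a + m) (partial (Suc b + n) F) t)"
    by (rule partial_L'[OF sm dM]) simp
  have e3: "partial n (L m F) t = partial n (partial m F) t - real n * partial (n + m) F t - (\<Sum>b<M. real (Suc b) * t (Suc b) * partial n (partial (Suc b + m) F) t)"
    by (rule partial_L'[OF sm dM n])
  have e4: "partial m (L n F) t = partial m (partial n F) t - real m * partial (m + n) F t - (\<Sum>b<M. real (Suc b) * t (Suc b) * partial m (partial (Suc b + n) F) t)"
    by (rule partial_L'[OF sm dM m])
  have sym: "\<And>i j. partial i (partial j F) t = partial j (partial i F) t" by (rule partial_sym[OF sm])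
  show "L n (L m F) t - L m (L n F) t = (real m - real n) * L (m + n) F t"
    unfolding L_fin[OF dLm, of n] L_fin[OF dLn, of m] L_fin[OF dM, of "m+n"] e1 e2 e3 e4
    by (rule alg[where DD = "\<lambda>i j. partial i (partial j F) t" and D = "\<lambda>i. partial i F t"
          and c = "\<lambda>a. real (Suc a) * t (Suc a)", OF sym])
next
  fix U f0 :: "(nat \<Rightarrow> real) \<Rightarrow> real" and D and t :: "nat \<Rightarrow> real" and k :: nat
  assume H1: "\<forall>t\<in>D. (\<lambda>n. real (Suc n) * t (Suc n) * U t ^ Suc n) sums 1"
    and H2: "\<forall>t\<in>D. \<forall>n\<ge>1. partial n f0 t = U t ^ n" and tD: "t \<in> D" and k: "k \<ge> 1"
  have "(\<lambda>n. U t ^ k * (real (Suc n) * t (Suc n) * U t ^ Suc n)) sums (U t ^ k * 1)"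
    using H1 tD by (intro sums_mult) auto
  moreover have "(\<lambda>n. U t ^ k * (real (Suc n) * t (Suc n) * U t ^ Suc n)) = (\<lambda>n. real (Suc n) * t (Suc n) * partial (Suc n + k) f0 t)"
    using H2 tD by (intro ext) (simp add: power_add algebra_simps)
  ultimately have "(\<Sum>n. real (Suc n) * t (Suc n) * partial (Suc n + k) f0 t) = U t ^ k"
    by (simp add: sums_iff)
  thus "L k f0 t = 0" using H2 tD k by (simp add: L_def)
qed

end
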